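(* Let $D,D'\in\mathcal{D}_1$ be persistence measures. Then \[ \|\beta_k(D)-\beta_k(D')\|_{L^1(\mathbb{R})}\le 2\,d_1(D,D'). \]
   Context: $\overline{\mathcal{X}}=\{(x,y)\in\mathbb{R}^2:y\le x\}$, $\mathcal{X}=\{y<x\}$, $\Delta$ the diagonal. $\mathbb{R}^2$ carries the metric $d_\infty((x,y),(x',y'))=\max\{|x-x'|,|y-y'|\}$, and $d_\infty((x,y),\Delta)=\frac12|y-x|$. $\mathcal{D}_1$ is the set of Radon measures $\mu$ on $\overline{\mathcal{X}}$ with $\int d_\infty(z,\Delta)\,d\mu(z)<\infty$. $d_1(\mu,\nu)=\inf_\pi\int_{\overline{\mathcal{X}}^2}d_\infty(z,w)\,d\pi(z,w)$ over Radon measures $\pi$ on $\overline{\mathcal{X}}^2$ with $\pi(A\times\overline{\mathcal{X}})=\mu(A)$ and $\pi(\overline{\mathcal{X}}\times B)=\nu(B)$ for all Borel $A,B\subset\mathcal{X}$. For $x\in\mathbb{R}$, $R_x=[x,\infty[\times]-\infty,x]$, and for a persistence measure $D$, $\beta_k(D)(x)=D(R_x)$ (the index $k$ refers to the homological degree the diagram comes from). *)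

theory Defs
  imports "HOL-Analysis.Analysis"
begin

type_synonym pt = "real \<times> real"

definition Xbar :: "pt set" where
  "Xbar = {(x, y). y \<le> x}"

definition Xopen :: "pt set" where
  "Xopen = {(x, y). y < x}"

definition dinf :: "pt \<Rightarrow> pt \<Rightarrow> real" where
  "dinf z w = max \<bar>fst z - fst w\<bar> \<bar>snd z - snd w\<bar>"

definition dinf_diag :: "pt \<Rightarrow> real" where
  "dinf_diag z = \<bar>snd z - fst z\<bar> / 2"

text \<open>Radon (= locally finite Borel) measure on the closed half-plane Xbar,
  represented as a Borel measure on the plane carried by Xbar.\<close>
definition radon_on_Xbar :: "pt measure \<Rightarrow> bool" where
  "radon_on_Xbar M \<longleftrightarrow> sets M = sets borel \<and> emeasure M (- Xbar) = 0 \<and>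
     (\<forall>K. compact K \<and> K \<subseteq> Xbar \<longrightarrow> emeasure M K < \<infinity>)"

definition D1 :: "pt measure set" where
  "D1 = {M. radon_on_Xbar M \<and> (\<integral>\<^sup>+ z. ennreal (dinf_diag z) \<partial>M) < \<infinity>}"

definition radon_on_Xbar2 :: "(pt \<times> pt) measure \<Rightarrow> bool" where
  "radon_on_Xbar2 P \<longleftrightarrow> sets P = sets borel \<and> emeasure P (- (Xbar \<times> Xbar)) = 0 \<and>
     (\<forall>K. compact K \<and> K \<subseteq> Xbar \<times> Xbar \<longrightarrow> emeasure P K < \<infinity>)"

definition admissible_plan :: "pt measure \<Rightarrow> pt measure \<Rightarrow> (pt \<times> pt) measure \<Rightarrow> bool" where
  "admissible_plan \<mu> \<nu> P \<longleftrightarrow> radon_on_Xbar2 P \<and>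
     (\<forall>A \<in> sets borel. A \<subseteq> Xopen \<longrightarrow> emeasure P (A \<times> Xbar) = emeasure \<mu> A) \<and>
     (\<forall>B \<in> sets borel. B \<subseteq> Xopen \<longrightarrow> emeasure P (Xbar \<times> B) = emeasure \<nu> B)"

definition d1 :: "pt measure \<Rightarrow> pt measure \<Rightarrow> ennreal" where
  "d1 \<mu> \<nu> = (INF P \<in> {P. admissible_plan \<mu> \<nu> P}.
              \<integral>\<^sup>+ zw. ennreal (dinf (fst zw) (snd zw)) \<partial>P)"

definition Rx :: "real \<Rightarrow> pt set" where
  "Rx x = {x..} \<times> {..x}"

text \<open>Persistent Betti curve; D(R_x) is finite for D in D1.\<close>
definition beta :: "pt measure \<Rightarrow> real \<Rightarrow> real" where
  "beta D x = enn2real (emeasure D (Rx x))"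

end

theory Submission
  imports Defs
begin

lemma closed_Xbar: "closed Xbar"
proof -
  have "Xbar = {p::pt. snd p \<le> fst p}" unfolding Xbar_def by auto
  moreover have "closed {p::pt. snd p \<le> fst p}"
    by (intro closed_Collect_le continuous_on_fst continuous_on_snd continuous_on_id)
  ultimately show ?thesis by simp
qed

lemma open_Xopen: "open Xopen"
proof -
  have "Xopen = {p::pt. snd p < fst p}" unfolding Xopen_def by auto
  moreover have "open {p::pt. snd p < fst p}"
    by (intro open_Collect_less continuous_on_fst continuous_on_snd continuous_on_id)
  ultimately show ?thesis by simp
qed

lemma Xopen_sub: "Xopen \<subseteq> Xbar" unfolding Xopen_def Xbar_def by auto

lemma closed_Rx: "closed (Rx x)" unfolding Rx_def by (intro closed_Times) auto

lemma Rx_borel[measurable]: "Rx x \<in> sets borel" using closed_Rx by simp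
lemma Xbar_borel[measurable]: "Xbar \<in> sets borel" using closed_Xbar by simp
lemma Xopen_borel[measurable]: "Xopen \<in> sets borel" using open_Xopen by simp

lemma compact_finite_gen:
  fixes M :: "'a::t2_space measure"
  assumes sets: "sets M = sets borel" and null: "emeasure M (- C) = 0" and C: "closed C"
    and fin: "\<forall>K. compact K \<and> K \<subseteq> C \<longrightarrow> emeasure M K < \<infinity>"
    and K: "compact K"
  shows "emeasure M K < \<infinity>"
proof -
  have mK: "K \<in> sets M" using sets borel_closed[OF compact_imp_closed[OF K]] by simp
  have mC: "C \<in> sets M" using sets C by (simp add: borel_closed)
  have "emeasure M K \<le> emeasure M (K \<inter> C) + emeasure M (K - C)"
    using mK mC by (metis Int_Diff_Un emeasure_subadditive sets.Diff sets.Int order_refl)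
  also have "emeasure M (K - C) \<le> emeasure M (- C)"
    using sets borel_open[OF open_Compl[OF C]] by (intro emeasure_mono) auto
  finally have "emeasure M K \<le> emeasure M (K \<inter> C)" using null by simp
  also have "\<dots> < \<infinity>" using fin compact_Int_closed[OF K C] by auto
  finally show ?thesis .
qed

lemma radon_compact_finite:
  assumes "radon_on_Xbar M" "compact K" shows "emeasure M K < \<infinity>"
  using assms closed_Xbar unfolding radon_on_Xbar_def
  by (intro compact_finite_gen[of M Xbar]) auto

lemma radon2_compact_finite:
  assumes "radon_on_Xbar2 M" "compact K" shows "emeasure M K < \<infinity>"
  using assms closed_Xbar unfolding radon_on_Xbar2_def
  by (intro compact_finite_gen[of M "Xbar \<times> Xbar"]) (auto intro: closed_Times)

lemma radon2_sigma_finite: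
  assumes "radon_on_Xbar2 P" shows "sigma_finite_measure P"
proof
  have sp: "space P = UNIV" using assms unfolding radon_on_Xbar2_def
    by (metis sets_eq_imp_space_eq space_borel)
  let ?A = "range (\<lambda>n::nat. cball (0::pt\<times>pt) (real n))"
  have "\<Union>?A = UNIV"
  proof safe
    fix p :: "pt\<times>pt"
    obtain n :: nat where "norm p \<le> real n" using real_arch_simple by blast
    then show "p \<in> \<Union>?A" by auto
  qed auto
  moreover have "?A \<subseteq> sets P" using assms unfolding radon_on_Xbar2_def by auto
  moreover have "\<forall>a\<in>?A. emeasure P a \<noteq> \<infinity>"
    using radon2_compact_finite[OF assms compact_cball] by (simp add: less_top)
  ultimately show "\<exists>A. countable A \<and> A \<subseteq> sets P \<and> \<Union> A = space P \<and> (\<forall>a\<in>A. emeasure P a \<noteq> \<infinity>)"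
    using sp by (intro exI[of _ ?A]) auto
qed

lemma D1_sets: "M \<in> D1 \<Longrightarrow> sets M = sets borel"
  unfolding D1_def radon_on_Xbar_def by auto

lemma D1_Rx_finite:
  assumes "M \<in> D1" shows "emeasure M (Rx x) < \<infinity>"
proof -
  have rad: "radon_on_Xbar M" and int: "(\<integral>\<^sup>+ z. ennreal (dinf_diag z) \<partial>M) < \<infinity>"
    using assms unfolding D1_def by auto
  have sM: "sets M = sets borel" using rad unfolding radon_on_Xbar_def by auto
  let ?B = "cbox (x, x-2) (x+2, x)"
  let ?F = "{z::pt. 1 \<le> dinf_diag z}"
  have clF: "closed ?F" unfolding dinf_diag_def
    by (intro closed_Collect_le continuous_intros) auto
  have mF: "?F \<in> sets M" using sM borel_closed[OF clF] by simp
  have mB: "?B \<in> sets M" using sM by simp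
  have sub: "Rx x \<subseteq> ?B \<union> ?F"
  proof
    fix z assume z: "z \<in> Rx x"
    obtain a b where zab: "z = (a,b)" by (cases z)
    show "z \<in> ?B \<union> ?F"
    proof (cases "a \<le> x + 2 \<and> x - 2 \<le> b")
      case True then show ?thesis using z zab by (auto simp: Rx_def cbox_Pair_eq)
    next
      case False then show ?thesis using z zab by (auto simp: Rx_def dinf_diag_def)
    qed
  qed
  have "emeasure M (Rx x) \<le> emeasure M (?B \<union> ?F)"
    using sub mB mF by (intro emeasure_mono) auto
  also have "\<dots> \<le> emeasure M ?B + emeasure M ?F"
    using mB mF by (intro emeasure_subadditive) auto
  also have "emeasure M ?F = (\<integral>\<^sup>+ z. indicator ?F z \<partial>M)"
    using mF by simp
  also have "\<dots> \<le> (\<integral>\<^sup>+ z. ennreal (dinf_diag z) \<partial>M)"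
    by (intro nn_integral_mono) (auto simp: indicator_def)
  finally have "emeasure M (Rx x) \<le> emeasure M ?B + (\<integral>\<^sup>+ z. ennreal (dinf_diag z) \<partial>M)"
    by (simp add: add_left_mono)
  also have "\<dots> < \<infinity>"
    using radon_compact_finite[OF rad compact_cbox] int by (simp add: less_top)
  finally show ?thesis .
qed

lemma D1_atoms_countable:
  assumes "M \<in> D1" shows "countable {x::real. emeasure M {(x,x)} \<noteq> 0}"
proof -
  have rad: "radon_on_Xbar M" using assms unfolding D1_def by auto
  have sM: "sets M = sets borel" using rad unfolding radon_on_Xbar_def by auto
  have spM: "space M = UNIV" using sM by (metis sets_eq_imp_space_eq space_borel)
  define K where "K n = cball (0::pt) (real n)" for n :: nat
  define N where "N n = restrict_space M (K n)" for n
  have mK: "K n \<in> sets M" for n using sM unfolding K_def by simp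
  have finK: "emeasure M (K n) < \<infinity>" for n
    using radon_compact_finite[OF rad] unfolding K_def by simp
  have fin: "finite_measure (N n)" for n
  proof
    have "space (N n) = K n" unfolding N_def using spM by (simp add: space_restrict_space)
    then show "emeasure (N n) (space (N n)) \<noteq> \<infinity>"
      unfolding N_def using mK finK spM by (simp add: emeasure_restrict_space less_top)
  qed
  have "{x::real. emeasure M {(x,x)} \<noteq> 0} \<subseteq> (\<Union>n. fst ` {p. measure (N n) {p} \<noteq> 0})"
  proof
    fix x :: real assume x: "x \<in> {x::real. emeasure M {(x,x)} \<noteq> 0}"
    obtain n :: nat where n: "norm (x,x) \<le> real n" using real_arch_simple by blast
    then have inK: "(x,x) \<in> K n" unfolding K_def by auto
    have "emeasure M {(x,x)} \<le> emeasure M (K n)"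
      using inK mK by (intro emeasure_mono) auto
    then have "emeasure M {(x,x)} < \<infinity>" using finK[of n] by simp
    moreover have "emeasure (N n) {(x,x)} = emeasure M {(x,x)}"
      unfolding N_def using inK mK spM by (intro emeasure_restrict_space) auto
    ultimately have "measure (N n) {(x,x)} \<noteq> 0"
      using x by (simp add: measure_def enn2real_eq_0_iff less_top)
    then show "x \<in> (\<Union>n. fst ` {p. measure (N n) {p} \<noteq> 0})" by force
  qed
  moreover have "countable (\<Union>n. fst ` {p. measure (N n) {p} \<noteq> 0})"
    using finite_measure.countable_support[OF fin] by auto
  ultimately show ?thesis by (rule countable_subset)
qed

lemma symdiff_len:
  fixes a b a' b' :: real
  shows "emeasure lborel {x. (b \<le> x \<and> x \<le> a \<and> b < a) \<noteq> (b' \<le> x \<and> x \<le> a' \<and> b' < a')}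
    \<le> ennreal (\<bar>a - a'\<bar> + \<bar>b - b'\<bar>)"
proof (cases "b < a")
  case T1: True
  show ?thesis
  proof (cases "b' < a'")
    case T2: True
    have "{x. (b \<le> x \<and> x \<le> a \<and> b < a) \<noteq> (b' \<le> x \<and> x \<le> a' \<and> b' < a')}
      \<subseteq> {min b b' .. max b b'} \<union> {min a a' .. max a a'}"
      using T1 T2 by auto
    then have "emeasure lborel {x. (b \<le> x \<and> x \<le> a \<and> b < a) \<noteq> (b' \<le> x \<and> x \<le> a' \<and> b' < a')}
      \<le> emeasure lborel ({min b b' .. max b b'} \<union> {min a a' .. max a a'})"
      by (intro emeasure_mono) auto
    also have "\<dots> \<le> emeasure lborel {min b b' .. max b b'} + emeasure lborel {min a a' .. max a a'}"
      by (intro emeasure_subadditive) auto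
    also have "\<dots> = ennreal (\<bar>b - b'\<bar>) + ennreal (\<bar>a - a'\<bar>)"
      by (simp add: abs_real_def max_def min_def)
    also have "\<dots> = ennreal (\<bar>a - a'\<bar> + \<bar>b - b'\<bar>)"
      by (simp add: ennreal_plus add.commute)
    finally show ?thesis .
  next
    case F2: False
    have "{x. (b \<le> x \<and> x \<le> a \<and> b < a) \<noteq> (b' \<le> x \<and> x \<le> a' \<and> b' < a')} = {b..a}"
      using T1 F2 by auto
    moreover have "a - b \<le> \<bar>a - a'\<bar> + \<bar>b - b'\<bar>" using F2 by linarith
    ultimately show ?thesis using T1 by (metis emeasure_lborel_Icc less_imp_le ennreal_leI)
  qed
next
  case F1: False
  show ?thesis
  proof (cases "b' < a'")
    case T2: True
    have "{x. (b \<le> x \<and> x \<le> a \<and> b < a) \<noteq> (b' \<le> x \<and> x \<le> a' \<and> b' < a')} = {b'..a'}"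
      using F1 T2 by auto
    moreover have "a' - b' \<le> \<bar>a - a'\<bar> + \<bar>b - b'\<bar>" using F1 by linarith
    ultimately show ?thesis using T2 by (metis emeasure_lborel_Icc less_imp_le ennreal_leI)
  next
    case F2: False
    have "{x. (b \<le> x \<and> x \<le> a \<and> b < a) \<noteq> (b' \<le> x \<and> x \<le> a' \<and> b' < a')} = {}"
      using F1 F2 by auto
    then show ?thesis by (metis emeasure_empty zero_le)
  qed
qed

lemma sets_P_eq: "sets ((borel \<Otimes>\<^sub>M borel) \<Otimes>\<^sub>M (borel \<Otimes>\<^sub>M borel)) = sets (borel :: (pt\<times>pt) measure)"
  by (metis borel_prod)

lemma sets_pt_eq: "sets (borel \<Otimes>\<^sub>M borel) = sets (borel :: pt measure)"
  by (metis borel_prod)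

definition inS :: "real \<Rightarrow> pt \<Rightarrow> bool" where
  "inS x z \<longleftrightarrow> (x \<le> fst z \<and> snd z \<le> x \<and> snd z < fst z)"

lemma inS_iff: "inS x z \<longleftrightarrow> z \<in> Rx x \<inter> Xopen"
  unfolding inS_def Rx_def Xopen_def by (cases z) auto

lemma pointwise:
  assumes D: "D \<in> D1" and D': "D' \<in> D1" and adm: "admissible_plan D D' P"
    and a1: "emeasure D {(x,x)} = 0" and a2: "emeasure D' {(x,x)} = 0"
  shows "ennreal \<bar>beta D x - beta D' x\<bar> \<le> emeasure P {zw. inS x (fst zw) \<noteq> inS x (snd zw)}"
proof -
  define S where "S = Rx x \<inter> Xopen"
  have mS: "S \<in> sets borel" unfolding S_def by simp
  have SX: "S \<subseteq> Xopen" unfolding S_def by auto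
  have rad2: "radon_on_Xbar2 P" using adm unfolding admissible_plan_def by auto
  have sP: "sets P = sets borel" using rad2 unfolding radon_on_Xbar2_def by auto
  have mprod: "A \<times> B \<in> sets P" if "A \<in> sets borel" "B \<in> sets borel" for A B :: "pt set"
  proof -
    have "A \<times> B \<in> sets ((borel \<Otimes>\<^sub>M borel) \<Otimes>\<^sub>M (borel \<Otimes>\<^sub>M borel))"
      using that sets_pt_eq by (intro pair_measureI) auto
    then show ?thesis using sP sets_P_eq by simp
  qed
  have eqR: "emeasure M (Rx x) = emeasure M S" if "M \<in> D1" "emeasure M {(x,x)} = 0" for M
  proof -
    have sM: "sets M = sets borel" and nul: "emeasure M (- Xbar) = 0"
      using that(1) unfolding D1_def radon_on_Xbar_def by auto
    have mX: "- Xbar \<in> sets M" using sM borel_open[OF open_Compl[OF closed_Xbar]] by simp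
    have sub: "Rx x \<subseteq> S \<union> ({(x,x)} \<union> - Xbar)"
      unfolding S_def Rx_def Xopen_def Xbar_def by auto
    have "emeasure M (Rx x) \<le> emeasure M (S \<union> ({(x,x)} \<union> - Xbar))"
      using sub mS mX sM by (intro emeasure_mono) auto
    also have "\<dots> \<le> emeasure M S + emeasure M ({(x,x)} \<union> - Xbar)"
      using mS mX sM by (intro emeasure_subadditive) auto
    also have "emeasure M ({(x,x)} \<union> - Xbar) \<le> emeasure M {(x,x)} + emeasure M (- Xbar)"
      using mX sM by (intro emeasure_subadditive) auto
    finally have "emeasure M (Rx x) \<le> emeasure M S"
      using that(2) nul by (simp add: add_left_mono)
    moreover have "emeasure M S \<le> emeasure M (Rx x)"
      using sM by (intro emeasure_mono) (auto simp: S_def)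
    ultimately show ?thesis by simp
  qed
  let ?A = "S \<times> Xbar" and ?B = "Xbar \<times> S"
  have mA: "?A \<in> sets P" and mB: "?B \<in> sets P" using mprod mS by auto
  have PA: "emeasure P ?A = emeasure D S"
    using adm mS SX unfolding admissible_plan_def by auto
  have PB: "emeasure P ?B = emeasure D' S"
    using adm mS SX unfolding admissible_plan_def by auto
  have bD: "beta D x = measure P ?A"
    unfolding beta_def measure_def using eqR[OF D a1] PA by simp
  have bD': "beta D' x = measure P ?B"
    unfolding beta_def measure_def using eqR[OF D' a2] PB by simp
  have finA: "emeasure P ?A \<noteq> \<infinity>" using PA eqR[OF D a1] D1_Rx_finite[OF D, of x] by simp
  have finB: "emeasure P ?B \<noteq> \<infinity>" using PB eqR[OF D' a2] D1_Rx_finite[OF D', of x] by simp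
  have fin_sub: "emeasure P E \<noteq> \<infinity>" if "E \<subseteq> ?A \<or> E \<subseteq> ?B" "E \<in> sets P" for E
    using that finA finB emeasure_mono[of E ?A P] emeasure_mono[of E ?B P] mA mB
    by (metis infinity_ennreal_def neq_top_trans)
  have mAB: "?A \<inter> ?B \<in> sets P" "?A - ?B \<in> sets P" "?B - ?A \<in> sets P" using mA mB by auto
  have f1: "emeasure P (?A \<inter> ?B) \<noteq> \<infinity>" "emeasure P (?A - ?B) \<noteq> \<infinity>" "emeasure P (?B - ?A) \<noteq> \<infinity>"
    using fin_sub mAB by auto
  have "measure P ?A = measure P ((?A \<inter> ?B) \<union> (?A - ?B))" by (simp add: Int_Diff_Un)
  also have "\<dots> = measure P (?A \<inter> ?B) + measure P (?A - ?B)"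
    using f1 mAB by (intro measure_Union) auto
  finally have eA: "measure P ?A = measure P (?A \<inter> ?B) + measure P (?A - ?B)" .
  have "measure P ?B = measure P ((?A \<inter> ?B) \<union> (?B - ?A))" by (metis Int_Diff_Un Int_commute)
  also have "\<dots> = measure P (?A \<inter> ?B) + measure P (?B - ?A)"
    using f1 mAB by (intro measure_Union) auto
  finally have eB: "measure P ?B = measure P (?A \<inter> ?B) + measure P (?B - ?A)" .
  have "\<bar>beta D x - beta D' x\<bar> \<le> measure P (?A - ?B) + measure P (?B - ?A)"
    unfolding bD bD' eA eB by (simp add: measure_nonneg abs_le_iff)
  then have "ennreal \<bar>beta D x - beta D' x\<bar> \<le> ennreal (measure P (?A - ?B) + measure P (?B - ?A))"
    by (rule ennreal_leI)
  also have "\<dots> = emeasure P (?A - ?B) + emeasure P (?B - ?A)"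
    using f1 by (simp add: ennreal_plus measure_nonneg emeasure_eq_ennreal_measure)
  also have "\<dots> = emeasure P ((?A - ?B) \<union> (?B - ?A))"
    using mAB by (intro plus_emeasure) auto
  also have "\<dots> \<le> emeasure P {zw. inS x (fst zw) \<noteq> inS x (snd zw)}"
  proof (rule emeasure_mono)
    show "(?A - ?B) \<union> (?B - ?A) \<subseteq> {zw. inS x (fst zw) \<noteq> inS x (snd zw)}"
      using Xopen_sub unfolding inS_iff S_def by auto
    have "{zw::pt\<times>pt \<in> space ((borel \<Otimes>\<^sub>M borel) \<Otimes>\<^sub>M (borel \<Otimes>\<^sub>M borel)). inS x (fst zw) \<noteq> inS x (snd zw)} \<in> sets ((borel \<Otimes>\<^sub>M borel) \<Otimes>\<^sub>M (borel \<Otimes>\<^sub>M borel))"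
      unfolding inS_def by measurable
    then have "{zw::pt\<times>pt. inS x (fst zw) \<noteq> inS x (snd zw)} \<in> sets ((borel \<Otimes>\<^sub>M borel) \<Otimes>\<^sub>M (borel \<Otimes>\<^sub>M borel))"
      by (simp add: space_pair_measure)
    then show "{zw. inS x (fst zw) \<noteq> inS x (snd zw)} \<in> sets P" using sP sets_P_eq by simp
  qed
  finally show ?thesis .
qed

lemma bound_plan:
  assumes D: "D \<in> D1" and D': "D' \<in> D1" and adm: "admissible_plan D D' P"
  shows "(\<integral>\<^sup>+ x. ennreal \<bar>beta D x - beta D' x\<bar> \<partial>lborel)
     \<le> 2 * (\<integral>\<^sup>+ zw. ennreal (dinf (fst zw) (snd zw)) \<partial>P)"
proof -
  have rad2: "radon_on_Xbar2 P" using adm unfolding admissible_plan_def by auto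
  have sP: "sets P = sets borel" using rad2 unfolding radon_on_Xbar2_def by auto
  have sP': "sets P = sets ((borel \<Otimes>\<^sub>M borel) \<Otimes>\<^sub>M (borel \<Otimes>\<^sub>M borel))"
    using sP sets_P_eq by simp
  have psf: "pair_sigma_finite lborel P"
    unfolding pair_sigma_finite_def
    using radon2_sigma_finite[OF rad2] lborel.sigma_finite_measure_axioms by simp
  define f where "f x zw = (if inS x (fst zw) \<noteq> inS x (snd zw) then 1 else 0 :: ennreal)"
    for x :: real and zw :: "pt \<times> pt"
  have fm: "case_prod f \<in> borel_measurable (lborel \<Otimes>\<^sub>M P)"
  proof -
    have "case_prod f \<in> borel_measurable (lborel \<Otimes>\<^sub>M ((borel \<Otimes>\<^sub>M borel) \<Otimes>\<^sub>M (borel \<Otimes>\<^sub>M borel)))"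
      unfolding f_def inS_def by measurable
    moreover have "sets (lborel \<Otimes>\<^sub>M P) = sets (lborel \<Otimes>\<^sub>M ((borel \<Otimes>\<^sub>M borel) \<Otimes>\<^sub>M (borel \<Otimes>\<^sub>M borel)))"
      using sP' by (intro sets_pair_measure_cong) auto
    ultimately show ?thesis using measurable_cong_sets by blast
  qed
  have ae: "AE x in lborel. emeasure D {(x,x)} = 0 \<and> emeasure D' {(x,x)} = 0"
  proof -
    have "countable ({x::real. emeasure D {(x,x)} \<noteq> 0} \<union> {x::real. emeasure D' {(x,x)} \<noteq> 0})"
      using D1_atoms_countable[OF D] D1_atoms_countable[OF D'] by auto
    from AE_not_in[OF countable_imp_null_set_lborel[OF this]] show ?thesis by auto
  qed
  have "(\<integral>\<^sup>+ x. ennreal \<bar>beta D x - beta D' x\<bar> \<partial>lborel)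
      \<le> (\<integral>\<^sup>+ x. emeasure P {zw. inS x (fst zw) \<noteq> inS x (snd zw)} \<partial>lborel)"
  proof (rule nn_integral_mono_AE)
    show "AE x in lborel. ennreal \<bar>beta D x - beta D' x\<bar> \<le> emeasure P {zw. inS x (fst zw) \<noteq> inS x (snd zw)}"
      using ae
    proof eventually_elim
      case (elim x) then show ?case using pointwise[OF D D' adm] by blast
    qed
  qed
  also have "\<dots> = (\<integral>\<^sup>+ x. (\<integral>\<^sup>+ zw. f x zw \<partial>P) \<partial>lborel)"
  proof (intro nn_integral_cong)
    fix x
    have "{zw::pt\<times>pt \<in> space ((borel \<Otimes>\<^sub>M borel) \<Otimes>\<^sub>M (borel \<Otimes>\<^sub>M borel)). inS x (fst zw) \<noteq> inS x (snd zw)} \<in> sets ((borel \<Otimes>\<^sub>M borel) \<Otimes>\<^sub>M (borel \<Otimes>\<^sub>M borel))"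
      unfolding inS_def by measurable
    then have m: "{zw::pt\<times>pt. inS x (fst zw) \<noteq> inS x (snd zw)} \<in> sets P"
      using sP' by (simp add: space_pair_measure)
    have "(\<lambda>zw. f x zw) = indicator {zw. inS x (fst zw) \<noteq> inS x (snd zw)}"
      unfolding f_def by (auto simp: indicator_def)
    then show "emeasure P {zw. inS x (fst zw) \<noteq> inS x (snd zw)} = (\<integral>\<^sup>+ zw. f x zw \<partial>P)"
      using m by simp
  qed
  also have "\<dots> = (\<integral>\<^sup>+ zw. (\<integral>\<^sup>+ x. f x zw \<partial>lborel) \<partial>P)"
    using pair_sigma_finite.Fubini'[OF psf fm] by simp
  also have "\<dots> \<le> (\<integral>\<^sup>+ zw. 2 * ennreal (dinf (fst zw) (snd zw)) \<partial>P)"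
  proof (intro nn_integral_mono)
    fix zw :: "pt \<times> pt"
    obtain a b a' b' where zw: "zw = ((a,b),(a',b'))" by (metis prod.exhaust)
    have "(\<lambda>x. f x zw) = indicator {x. (b \<le> x \<and> x \<le> a \<and> b < a) \<noteq> (b' \<le> x \<and> x \<le> a' \<and> b' < a')}"
      unfolding f_def inS_def zw by (auto simp: indicator_def fun_eq_iff)
    moreover have "{x. (b \<le> x \<and> x \<le> a \<and> b < a) \<noteq> (b' \<le> x \<and> x \<le> a' \<and> b' < a')} \<in> sets lborel"
    proof -
      have "{x \<in> space lborel. (b \<le> x \<and> x \<le> a \<and> b < a) \<noteq> (b' \<le> x \<and> x \<le> a' \<and> b' < a')} \<in> sets lborel"
        by measurable
      then show ?thesis by simp
    qed
    ultimately have "(\<integral>\<^sup>+ x. f x zw \<partial>lborel) = emeasure lborel {x. (b \<le> x \<and> x \<le> a \<and> b < a) \<noteq> (b' \<le> x \<and> x \<le> a' \<and> b' < a')}"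
      by simp
    also have "\<dots> \<le> ennreal (\<bar>a - a'\<bar> + \<bar>b - b'\<bar>)" by (rule symdiff_len)
    also have "\<dots> \<le> ennreal (2 * dinf (fst zw) (snd zw))"
      unfolding zw dinf_def by (intro ennreal_leI) (simp add: max_def)
    also have "\<dots> = 2 * ennreal (dinf (fst zw) (snd zw))"
      by (simp add: ennreal_mult dinf_def)
    finally show "(\<integral>\<^sup>+ x. f x zw \<partial>lborel) \<le> 2 * ennreal (dinf (fst zw) (snd zw))" .
  qed
  also have "\<dots> = 2 * (\<integral>\<^sup>+ zw. ennreal (dinf (fst zw) (snd zw)) \<partial>P)"
  proof (rule nn_integral_cmult)
    have "(\<lambda>zw. ennreal (dinf (fst zw) (snd zw))) \<in> borel_measurable ((borel \<Otimes>\<^sub>M borel) \<Otimes>\<^sub>M (borel \<Otimes>\<^sub>M borel))"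
      unfolding dinf_def by measurable
    then show "(\<lambda>zw. ennreal (dinf (fst zw) (snd zw))) \<in> borel_measurable P"
      using sP' measurable_cong_sets by blast
  qed
  finally show ?thesis .
qed

theorem mainTheorem7:
  assumes "D \<in> D1" and "D' \<in> D1"
  shows "(\<integral>\<^sup>+ x. ennreal \<bar>beta D x - beta D' x\<bar> \<partial>lborel) \<le> 2 * d1 D D'"
proof -
  let ?L = "(\<integral>\<^sup>+ x. ennreal \<bar>beta D x - beta D' x\<bar> \<partial>lborel)"
  have "?L / 2 \<le> d1 D D'"
    unfolding d1_def
  proof (rule INF_greatest)
    fix P assume "P \<in> {P. admissible_plan D D' P}"
    then have "?L \<le> 2 * (\<integral>\<^sup>+ zw. ennreal (dinf (fst zw) (snd zw)) \<partial>P)"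
      using bound_plan[OF assms] by auto
    then have "?L / 2 \<le> 2 * (\<integral>\<^sup>+ zw. ennreal (dinf (fst zw) (snd zw)) \<partial>P) / 2"
      by (rule divide_right_mono_ennreal)
    also have "\<dots> = (\<integral>\<^sup>+ zw. ennreal (dinf (fst zw) (snd zw)) \<partial>P)"
      by (simp add: ennreal_divide_times mult.commute[of 2] ennreal_times_divide[symmetric] divide_ennreal ennreal_divide_self)
    finally show "?L / 2 \<le> (\<integral>\<^sup>+ zw. ennreal (dinf (fst zw) (snd zw)) \<partial>P)" .
  qed
  then have "?L / 2 * 2 \<le> 2 * d1 D D'" by (metis mult.commute mult_right_mono zero_le)
  moreover have "?L / 2 * 2 = ?L"
    by (simp add: ennreal_divide_times divide_ennreal ennreal_divide_self)
  ultimately show ?thesis by simp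
qed

end
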